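(* Let $f:2^V\to\mathbb{R}_+$ be a nonnegative, normalized ($f(\emptyset)=0$) supermodular function that is $r$-decomposable, and let $k$ be an integer with $r<k\le n-1$. Run greedy peeling: $S_n\gets V$; for $i=n,\dots,k+1$, choose $v_i\in\arg\min_{v\in S_i}f(v\mid S_i\setminus\{v\})$ and set $S_{i-1}\gets S_i\setminus\{v_i\}$. Then for all integers $i,j$ with $k\le i\le j\le n$, $$f(S_i)\ \ge\ \frac{\binom{i}{r}}{\binom{j}{r}}\,f(S_j)\ \ge\ \frac{r!}{r^r}\cdot\frac{i^r}{j^r}\,f(S_j).$$
   Context: $V$ is a finite set with $n=|V|$; $f(v\mid S)=f(S\cup\{v\})-f(S)$. Supermodular: $f(A)+f(B)\le f(A\cup B)+f(A\cap B)$ for all $A,B\subseteq V$. $f$ is $r$-decomposable if there exist subsets $V_1,\dots,V_m\subseteq V$ with $|V_i|\le r$ and nonnegative supermodular $f_i:2^{V_i}\to\mathbb{R}_+$ with $f(S)=\sum_i f_i(S\cap V_i)$ for all $S\subseteq V$. *)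

theory Defs
  imports Complex_Main
begin

definition marg :: "('a set \<Rightarrow> real) \<Rightarrow> 'a \<Rightarrow> 'a set \<Rightarrow> real" where
  "marg f v S = f (S \<union> {v}) - f S"

definition supermodular_on :: "'a set \<Rightarrow> ('a set \<Rightarrow> real) \<Rightarrow> bool" where
  "supermodular_on W f \<longleftrightarrow>
     (\<forall>A B. A \<subseteq> W \<longrightarrow> B \<subseteq> W \<longrightarrow> f A + f B \<le> f (A \<union> B) + f (A \<inter> B))"

definition r_decomposable :: "nat \<Rightarrow> 'a set \<Rightarrow> ('a set \<Rightarrow> real) \<Rightarrow> bool" where
  "r_decomposable r V f \<longleftrightarrow>
     (\<exists>(m::nat) (Vs :: nat \<Rightarrow> 'a set) (fs :: nat \<Rightarrow> 'a set \<Rightarrow> real).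
        (\<forall>i<m. Vs i \<subseteq> V \<and> card (Vs i) \<le> r \<and> supermodular_on (Vs i) (fs i)
               \<and> (\<forall>T. T \<subseteq> Vs i \<longrightarrow> 0 \<le> fs i T)) \<and>
        (\<forall>S. S \<subseteq> V \<longrightarrow> f S = (\<Sum>i<m. fs i (S \<inter> Vs i))))"

definition greedy_peeling :: "'a set \<Rightarrow> ('a set \<Rightarrow> real) \<Rightarrow> nat \<Rightarrow> (nat \<Rightarrow> 'a set) \<Rightarrow> bool" where
  "greedy_peeling V f k S \<longleftrightarrow>
     S (card V) = V \<and>
     (\<forall>i. k < i \<and> i \<le> card V \<longrightarrow>
        (\<exists>v\<in>S i. (\<forall>u\<in>S i. marg f v (S i - {v}) \<le> marg f u (S i - {u}))
                  \<and> S (i - 1) = S i - {v}))"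

end

theory Submission
  imports Defs
begin

lemma sum_marg_le:
  fixes f :: "'a set \<Rightarrow> real"
  assumes finV: "finite V"
    and hyp: "\<forall>i<m. Vs i \<subseteq> V \<and> card (Vs i) \<le> r \<and> supermodular_on (Vs i) (fs i)
               \<and> (\<forall>T. T \<subseteq> Vs i \<longrightarrow> 0 \<le> fs i T)"
    and dec: "\<forall>S. S \<subseteq> V \<longrightarrow> f S = (\<Sum>i<m. fs i (S \<inter> Vs i))"
    and SV: "S \<subseteq> V"
  shows "(\<Sum>v\<in>S. marg f v (S - {v})) \<le> real r * f S"
proof -
  have finS: "finite S" using finV SV finite_subset by blast
  have "(\<Sum>v\<in>S. marg f v (S - {v})) = (\<Sum>v\<in>S. \<Sum>t<m. fs t (S \<inter> Vs t) - fs t ((S - {v}) \<inter> Vs t))"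
  proof (rule sum.cong)
    fix v assume v: "v \<in> S"
    have e: "S - {v} \<union> {v} = S" using v by auto
    have "marg f v (S - {v}) = f S - f (S - {v})" unfolding marg_def e ..
    also have "\<dots> = (\<Sum>t<m. fs t (S \<inter> Vs t)) - (\<Sum>t<m. fs t ((S - {v}) \<inter> Vs t))"
      using dec SV by (metis Diff_subset order_trans)
    also have "\<dots> = (\<Sum>t<m. fs t (S \<inter> Vs t) - fs t ((S - {v}) \<inter> Vs t))"
      by (simp add: sum_subtractf)
    finally show "marg f v (S - {v}) = (\<Sum>t<m. fs t (S \<inter> Vs t) - fs t ((S - {v}) \<inter> Vs t))" .
  qed simp
  also have "\<dots> = (\<Sum>t<m. \<Sum>v\<in>S. fs t (S \<inter> Vs t) - fs t ((S - {v}) \<inter> Vs t))"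
    by (rule sum.swap)
  also have "\<dots> \<le> (\<Sum>t<m. real r * fs t (S \<inter> Vs t))"
  proof (rule sum_mono)
    fix t assume t: "t \<in> {..<m}"
    let ?W = "Vs t"
    have W: "?W \<subseteq> V" "card ?W \<le> r" "\<forall>T. T \<subseteq> ?W \<longrightarrow> 0 \<le> fs t T" using hyp t by auto
    have finW: "finite ?W" using W(1) finV finite_subset by blast
    have "(\<Sum>v\<in>S. fs t (S \<inter> ?W) - fs t ((S - {v}) \<inter> ?W))
        \<le> (\<Sum>v\<in>S. if v \<in> ?W then fs t (S \<inter> ?W) else 0)"
    proof (rule sum_mono)
      fix v assume v: "v \<in> S"
      show "fs t (S \<inter> ?W) - fs t ((S - {v}) \<inter> ?W) \<le> (if v \<in> ?W then fs t (S \<inter> ?W) else 0)"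
      proof (cases "v \<in> ?W")
        case True
        have "0 \<le> fs t ((S - {v}) \<inter> ?W)" using W(3) by auto
        then show ?thesis using True by simp
      next
        case False
        then have "(S - {v}) \<inter> ?W = S \<inter> ?W" by auto
        then show ?thesis using False by simp
      qed
    qed
    also have "\<dots> = real (card (S \<inter> ?W)) * fs t (S \<inter> ?W)"
      using finS by (simp add: sum.If_cases)
    also have "\<dots> \<le> real r * fs t (S \<inter> ?W)"
    proof (rule mult_right_mono)
      have "card (S \<inter> ?W) \<le> card ?W" using finW by (simp add: card_mono)
      then show "real (card (S \<inter> ?W)) \<le> real r" using W(2) by simp
      show "0 \<le> fs t (S \<inter> ?W)" using W(3) by auto
    qed
    finally show "(\<Sum>v\<in>S. fs t (S \<inter> ?W) - fs t ((S - {v}) \<inter> ?W)) \<le> real r * fs t (S \<inter> ?W)" .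
  qed
  also have "\<dots> = real r * f S" using dec SV by (simp add: sum_distrib_left)
  finally show ?thesis .
qed

lemma ratio_ineq:
  fixes i j r :: nat
  assumes "r \<le> i" "i \<le> j"
  shows "fact r / real r ^ r * (real i ^ r / real j ^ r) \<le> real (i choose r) / real (j choose r)"
proof -
  have jpos: "0 < real (j choose r)" using assms by simp
  have a: "(real i / real r) ^ r \<le> real (i choose r)"
    using binomial_ge_n_over_k_pow_k[OF assms(1)] by simp
  have b: "real (j choose r) * fact r \<le> real j ^ r"
    using binomial_fact_pow[of j r] by (metis of_nat_fact of_nat_le_iff of_nat_mult of_nat_power)
  have fpos: "(0::real) < fact r" by simp
  have lhs: "fact r / real r ^ r * (real i ^ r / real j ^ r) = fact r * (real i / real r) ^ r / real j ^ r"
    by (simp add: power_divide)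
  show ?thesis
  proof (cases "i = 0")
    case True
    then have "r = 0" using assms by simp
    then show ?thesis by simp
  next
    case False
    then have jp: "0 < real j ^ r" using assms by simp
    have "fact r * (real i / real r) ^ r / real j ^ r \<le> fact r * real (i choose r) / real j ^ r"
      using a fpos jp by (simp add: divide_right_mono)
    also have "\<dots> \<le> fact r * real (i choose r) / (real (j choose r) * fact r)"
      by (rule divide_left_mono) (use b jpos fpos jp in auto)
    also have "\<dots> = real (i choose r) / real (j choose r)" using fpos by simp
    finally show ?thesis using lhs by simp
  qed
qed

theorem lemma1:
  fixes V :: "'a set" and f :: "'a set \<Rightarrow> real" and r k :: nat and S :: "nat \<Rightarrow> 'a set"
  assumes "finite V"
    and "\<forall>T. T \<subseteq> V \<longrightarrow> 0 \<le> f T"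
    and "f {} = 0"
    and "supermodular_on V f"
    and "r_decomposable r V f"
    and "r < k" and "k \<le> card V - 1"
    and "greedy_peeling V f k S"
  shows "\<forall>i j. k \<le> i \<and> i \<le> j \<and> j \<le> card V \<longrightarrow>
           real (i choose r) / real (j choose r) * f (S j) \<le> f (S i) \<and>
           fact r / real r ^ r * (real i ^ r / real j ^ r) * f (S j)
             \<le> real (i choose r) / real (j choose r) * f (S j)"
proof -
  let ?n = "card V"
  obtain m :: nat and Vs :: "nat \<Rightarrow> 'a set" and fs :: "nat \<Rightarrow> 'a set \<Rightarrow> real" where hyp: "\<forall>i<m. Vs i \<subseteq> V \<and> card (Vs i) \<le> r \<and> supermodular_on (Vs i) (fs i)
               \<and> (\<forall>T. T \<subseteq> Vs i \<longrightarrow> 0 \<le> fs i T)"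
    and dec: "\<forall>S. S \<subseteq> V \<longrightarrow> f S = (\<Sum>i<m. fs i (S \<inter> Vs i))"
    using assms(5) unfolding r_decomposable_def by (elim exE conjE) (rule that; assumption)
  have gp: "S ?n = V \<and> (\<forall>i. k < i \<and> i \<le> ?n \<longrightarrow>
        (\<exists>v\<in>S i. (\<forall>u\<in>S i. marg f v (S i - {v}) \<le> marg f u (S i - {u})) \<and> S (i - 1) = S i - {v}))"
    using assms(8) unfolding greedy_peeling_def .
  have S0: "S ?n = V" using gp by (rule conjunct1)
  have step: "\<exists>v\<in>S i. (\<forall>u\<in>S i. marg f v (S i - {v}) \<le> marg f u (S i - {u})) \<and> S (i - 1) = S i - {v}"
    if "k < i" "i \<le> ?n" for i
    using spec[OF conjunct2[OF gp], of i] that by simp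
  have inv: "k \<le> ?n - d \<Longrightarrow> S (?n - d) \<subseteq> V \<and> card (S (?n - d)) = ?n - d" for d
  proof (induction d)
    case 0 then show ?case using S0 by simp
  next
    case (Suc d)
    let ?i = "?n - d"
    have ki: "k < ?i" using Suc.prems assms(6) by linarith
    have IH: "S ?i \<subseteq> V \<and> card (S ?i) = ?i" using Suc ki by simp
    obtain v where v: "v \<in> S ?i" "S (?i - 1) = S ?i - {v}" using step[OF ki] by auto
    have fin: "finite (S ?i)" using IH assms(1) finite_subset by blast
    have e: "S (?n - Suc d) = S ?i - {v}" using v(2) by (simp add: diff_diff_left)
    have s1: "S (?n - Suc d) \<subseteq> V" using IH e by auto
    have "card (S (?n - Suc d)) = card (S ?i) - 1" using v(1) fin e by (simp add: card_Diff_singleton)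
    then have s2: "card (S (?n - Suc d)) = ?n - Suc d" using IH by simp
    show ?case using s1 s2 by blast
  qed
  have invi: "k \<le> i \<Longrightarrow> i \<le> ?n \<Longrightarrow> S i \<subseteq> V \<and> card (S i) = i" for i
    using inv[of "?n - i"] by simp
  have nn: "\<And>i. k \<le> i \<Longrightarrow> i \<le> ?n \<Longrightarrow> 0 \<le> f (S i)" using invi assms(2) by blast
  have onestep: "real (i - 1 choose r) / real (i choose r) * f (S i) \<le> f (S (i - 1))"
    if ki: "k < i" and iN: "i \<le> ?n" for i
  proof -
    obtain v where v: "v \<in> S i" "\<forall>u\<in>S i. marg f v (S i - {v}) \<le> marg f u (S i - {u})"
      "S (i - 1) = S i - {v}" using step[OF ki iN] by auto
    have Si: "S i \<subseteq> V" "card (S i) = i" using invi ki iN by auto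
    have "real i * marg f v (S i - {v}) = (\<Sum>u\<in>S i. marg f v (S i - {v}))" using Si by simp
    also have "\<dots> \<le> (\<Sum>u\<in>S i. marg f u (S i - {u}))" using v(2) by (intro sum_mono) auto
    also have "\<dots> \<le> real r * f (S i)" by (rule sum_marg_le[OF assms(1) hyp dec Si(1)])
    finally have A: "real i * marg f v (S i - {v}) \<le> real r * f (S i)" .
    have e: "S i - {v} \<union> {v} = S i" using v by auto
    have B: "f (S (i - 1)) = f (S i) - marg f v (S i - {v})" using v(3) unfolding marg_def e by simp
    have ipos: "0 < real i" using ki by simp
    have rle: "r \<le> i" using ki assms(6) by simp
    have rd: "real (i - r) = real i - real r" using rle by (simp add: of_nat_diff)
    have "real i * f (S (i - 1)) = real i * f (S i) - real i * marg f v (S i - {v})"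
      using B by (simp add: right_diff_distrib)
    also have "\<dots> \<ge> real i * f (S i) - real r * f (S i)" using A by linarith
    finally have C: "real i * f (S (i - 1)) \<ge> real (i - r) * f (S i)"
      unfolding rd by (simp add: left_diff_distrib)
    have bin: "real (i - r) * real (i choose r) = real i * real (i - 1 choose r)"
      using binomial_absorb_comp[of i r] by (metis of_nat_mult)
    have cpos: "0 < real (i choose r)" using ki assms(6) by simp
    have q: "real (i - 1 choose r) / real (i choose r) = real (i - r) / real i"
      using bin cpos ipos by (simp add: divide_simps)
    have "real (i - r) / real i * f (S i) = (real (i - r) * f (S i)) / real i" by simp
    also have "\<dots> \<le> (real i * f (S (i - 1))) / real i" using C ipos by (intro divide_right_mono) auto
    also have "\<dots> = f (S (i - 1))" using ipos by simp
    finally show ?thesis unfolding q .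
  qed
  have chain: "k \<le> j - d \<Longrightarrow> j \<le> ?n \<Longrightarrow>
      real (j - d choose r) / real (j choose r) * f (S j) \<le> f (S (j - d))" for j d
  proof (induction d)
    case 0
    have "0 < real (j choose r)" using 0 assms(6) by simp
    then show ?case by simp
  next
    case (Suc d)
    let ?i = "j - d"
    have ki: "k < ?i" using Suc.prems assms(6) by linarith
    have IH: "real (?i choose r) / real (j choose r) * f (S j) \<le> f (S ?i)"
      using Suc.IH[OF less_imp_le[OF ki] Suc.prems(2)] .
    have iN: "?i \<le> ?n" using Suc.prems by simp
    have os: "real (?i - 1 choose r) / real (?i choose r) * f (S ?i) \<le> f (S (?i - 1))"
      using onestep[OF ki iN] .
    have q0: "0 \<le> real (?i - 1 choose r) / real (?i choose r)" by simp
    have cpos: "0 < real (?i choose r)" using ki assms(6) by simp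
    have "real (?i - 1 choose r) / real (j choose r) * f (S j)
        = real (?i - 1 choose r) / real (?i choose r) * (real (?i choose r) / real (j choose r) * f (S j))"
      using cpos by simp
    also have "\<dots> \<le> real (?i - 1 choose r) / real (?i choose r) * f (S ?i)"
      using IH q0 by (rule mult_left_mono)
    also have "\<dots> \<le> f (S (?i - 1))" by (rule os)
    finally have X: "real (?i - 1 choose r) / real (j choose r) * f (S j) \<le> f (S (?i - 1))" .
    have eq: "j - Suc d = j - d - 1" by simp
    show ?case unfolding eq by (rule X)
  qed
  show ?thesis
  proof (intro allI impI conjI)
    fix i j assume h: "k \<le> i \<and> i \<le> j \<and> j \<le> ?n"
    show "real (i choose r) / real (j choose r) * f (S j) \<le> f (S i)"
      using chain[of j "j - i"] h by simp
    have "0 \<le> f (S j)" using nn h by auto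
    then show "fact r / real r ^ r * (real i ^ r / real j ^ r) * f (S j)
             \<le> real (i choose r) / real (j choose r) * f (S j)"
      using ratio_ineq[of r i j] h assms(6) by (intro mult_right_mono) auto
  qed
qed

end
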